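(* Let $G$ be a connected graph with vertex set $V=\{1,\dots,n\}$, let $A$ be a real symmetric $n\times n$ matrix with $\mathcal{G}(A)=G$ such that all nonzero off-diagonal entries of $A$ have the same sign, and let $S\subseteq V$ be a zero forcing set of $G$. Then the real Lie algebra generated by $iA$ and $\{i{\bf e}_j{\bf e}_j^T : j\in S\}$ equals $u(n)$.
   Context: ${\bf e}_j$ is the $j$th standard basis vector of $\mathbb{R}^n$. For a real symmetric $A=[a_{kj}]$, $\mathcal{G}(A)$ is the simple graph on $\{1,\dots,n\}$ with edges $\{kj: a_{kj}\neq0,\ k\neq j\}$. Zero forcing: color vertices black or white; a black vertex $v$ forces a white vertex $w$ if $w$ is the unique white neighbor of $v$, and then $w$ becomes black. $S$ is a zero forcing set if starting with exactly $S$ black, repeated forcing makes all vertices black. The real Lie algebra generated by a set of matrices is the smallest real vector space containing them closed under $[X,Y]=XY-YX$; $u(n)$ is the real Lie algebra of $n\times n$ complex skew-Hermitian matrices. *)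

theory Defs
  imports "HOL-Analysis.Analysis"
begin

text \<open>Vertex set {1..n} is modelled by a finite type 'n (n = CARD('n)).
  A simple graph on 'n is an edge relation E :: 'n => 'n => bool (symmetric, irreflexive).\<close>

definition matrix_graph :: "real^'n^'n \<Rightarrow> 'n \<Rightarrow> 'n \<Rightarrow> bool" where
  "matrix_graph A k j \<longleftrightarrow> k \<noteq> j \<and> A $ k $ j \<noteq> 0"

definition graph_connected :: "('n \<Rightarrow> 'n \<Rightarrow> bool) \<Rightarrow> bool" where
  "graph_connected E \<longleftrightarrow> (\<forall>u v. E\<^sup>*\<^sup>* u v)"

inductive_set forced_closure :: "('n \<Rightarrow> 'n \<Rightarrow> bool) \<Rightarrow> 'n set \<Rightarrow> 'n set"
  for E :: "'n \<Rightarrow> 'n \<Rightarrow> bool" and S :: "'n set" where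
  init: "v \<in> S \<Longrightarrow> v \<in> forced_closure E S"
| force: "\<lbrakk>v \<in> forced_closure E S; E v w;
           \<And>u. E v u \<Longrightarrow> u \<noteq> w \<Longrightarrow> u \<in> forced_closure E S\<rbrakk>
          \<Longrightarrow> w \<in> forced_closure E S"

definition zero_forcing_set :: "('n \<Rightarrow> 'n \<Rightarrow> bool) \<Rightarrow> 'n set \<Rightarrow> bool" where
  "zero_forcing_set E S \<longleftrightarrow> forced_closure E S = UNIV"

definition lie_bracket :: "complex^'n^'n \<Rightarrow> complex^'n^'n \<Rightarrow> complex^'n^'n" where
  "lie_bracket X Y = X ** Y - Y ** X"

inductive_set real_lie_generated :: "(complex^'n^'n) set \<Rightarrow> (complex^'n^'n) set"
  for X :: "(complex^'n^'n) set" where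
  gen: "M \<in> X \<Longrightarrow> M \<in> real_lie_generated X"
| zero: "0 \<in> real_lie_generated X"
| add: "M \<in> real_lie_generated X \<Longrightarrow> N \<in> real_lie_generated X \<Longrightarrow> M + N \<in> real_lie_generated X"
| smult: "M \<in> real_lie_generated X \<Longrightarrow> (r::real) *\<^sub>R M \<in> real_lie_generated X"
| bracket: "M \<in> real_lie_generated X \<Longrightarrow> N \<in> real_lie_generated X \<Longrightarrow> lie_bracket M N \<in> real_lie_generated X"

definition skew_hermitian_matrices :: "(complex^'n^'n) set" where
  "skew_hermitian_matrices = {M. (\<chi> i j. cnj (M $ j $ i)) = - M}"

definition cmat_of_real :: "real^'n^'n \<Rightarrow> complex^'n^'n" where
  "cmat_of_real A = (\<chi> i j. complex_of_real (A $ i $ j))"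

definition diag_unit :: "'n \<Rightarrow> complex^'n^'n" where
  "diag_unit j = (\<chi> k l. if k = j \<and> l = j then 1 else 0)"

definition cmat_scale :: "complex \<Rightarrow> complex^'n^'n \<Rightarrow> complex^'n^'n" where
  "cmat_scale c M = (\<chi> i j. c * M $ i $ j)"

end

theory Submission imports Defs begin

definition Em :: "'n \<Rightarrow> 'n \<Rightarrow> complex^'n^'n" where
  "Em a b = (\<chi> k l. if k = a \<and> l = b then 1 else 0)"
definition Km :: "'n \<Rightarrow> 'n \<Rightarrow> complex^'n^'n" where
  "Km a b = Em a b - Em b a"
definition Hm :: "'n \<Rightarrow> 'n \<Rightarrow> complex^'n^'n" where
  "Hm a b = cmat_scale \<i> (Em a b + Em b a)"
definition Dm :: "'n \<Rightarrow> complex^'n^'n" where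
  "Dm u = cmat_scale \<i> (diag_unit u)"

lemma mm_entry: "((X::complex^'m^'k) ** (Y::complex^'p^'m)) $ k $ l = (\<Sum>m\<in>UNIV. X$k$m * Y$m$l)"
  by (simp add: matrix_matrix_mult_def)

lemma sum_if_left: "(\<Sum>m\<in>(UNIV::'n::finite set). (if m = b then c else 0) * f m) = (c::complex) * f b"
  by (simp add: if_distrib[of "\<lambda>x. x * _"] cong: if_cong)
lemma sum_if_right: "(\<Sum>m\<in>(UNIV::'n::finite set). f m * (if m = b then c else 0)) = f b * (c::complex)"
  by (simp add: if_distrib[of "\<lambda>x. _ * x"] cong: if_cong)

lemma Km_entry: "Km a b $ k $ l = (if k = a \<and> l = b then 1 else 0) - (if k = b \<and> l = a then 1 else 0)"
  by (simp add: Km_def Em_def)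
lemma Hm_entry: "Hm a b $ k $ l = \<i> * ((if k = a \<and> l = b then 1 else 0) + (if k = b \<and> l = a then 1 else 0))"
  by (simp add: Hm_def Em_def cmat_scale_def)
lemma Dm_entry: "Dm u $ k $ l = (if k = u \<and> l = u then \<i> else 0)"
  by (simp add: Dm_def diag_unit_def cmat_scale_def)

lemma Dm_left: "(Dm u ** Y) $ k $ l = (if k = u then \<i> * Y$u$l else 0)"
  by (cases "k = u") (simp_all add: mm_entry Dm_entry sum_if_left sum_if_right sum_negf)
lemma Dm_right: "(Y ** Dm u) $ k $ l = (if l = u then Y$k$u * \<i> else 0)"
  by (cases "l = u") (simp_all add: mm_entry Dm_entry sum_if_left sum_if_right sum_negf)
lemma Km_left: "(Km a b ** Y) $ k $ l = (if k = a then Y$b$l else 0) - (if k = b then Y$a$l else 0)"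
  by (cases "k = a"; cases "k = b") (simp_all add: mm_entry Km_entry left_diff_distrib sum_subtractf sum_if_left sum_if_right sum_negf)
lemma Km_right: "(Y ** Km a b) $ k $ l = (if l = b then Y$k$a else 0) - (if l = a then Y$k$b else 0)"
  by (cases "l = a"; cases "l = b") (simp_all add: mm_entry Km_entry right_diff_distrib sum_subtractf sum_if_left sum_if_right sum_negf)

lemma lb_entry: "lie_bracket X Y $ k $ l = (X ** Y)$k$l - (Y ** X)$k$l"
  by (simp add: lie_bracket_def)


lemma scaleR_entry: "((r::real) *\<^sub>R (M::complex^'n^'n))$k$l = complex_of_real r * M$k$l"
  by (simp add: scaleR_conv_of_real[where x="M$k$l"])

lemma L_diff: "M \<in> real_lie_generated X \<Longrightarrow> N \<in> real_lie_generated X \<Longrightarrow> M - N \<in> real_lie_generated X"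
proof -
  assume a: "M \<in> real_lie_generated X" "N \<in> real_lie_generated X"
  have "M + (-1) *\<^sub>R N \<in> real_lie_generated X"
    by (intro real_lie_generated.add real_lie_generated.smult a)
  thus ?thesis by simp
qed

lemma L_sum: "finite F \<Longrightarrow> (\<And>x. x \<in> F \<Longrightarrow> f x \<in> real_lie_generated X) \<Longrightarrow> sum f F \<in> real_lie_generated X"
  by (induction F rule: finite_induct) (auto intro: real_lie_generated.intros)

lemma L_P:
  assumes "Dm u \<in> real_lie_generated X" "Y \<in> real_lie_generated X"
  shows "(\<chi> k l. if (k = u) \<noteq> (l = u) then Y$k$l else 0) \<in> real_lie_generated X"
proof -
  have "(\<chi> k l. if (k = u) \<noteq> (l = u) then Y$k$l else 0) = (-1::real) *\<^sub>R lie_bracket (Dm u) (lie_bracket (Dm u) Y)"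
    by (auto simp: vec_eq_iff lb_entry Dm_left Dm_right algebra_simps)
  thus ?thesis using assms by (metis real_lie_generated.bracket real_lie_generated.smult)
qed

lemma H_eq: "v \<noteq> w \<Longrightarrow> Hm v w = lie_bracket (Dm v) (Km v w)"
  by (auto simp: vec_eq_iff lb_entry Dm_left Dm_right Km_entry Hm_entry algebra_simps)

lemma H_diag: "Hm v v = (2::real) *\<^sub>R Dm v"
  by (auto simp: vec_eq_iff Dm_entry Hm_entry algebra_simps scaleR_conv_of_real)

lemma D_eq: "v \<noteq> w \<Longrightarrow> Dm w = Dm v - (1/2::real) *\<^sub>R lie_bracket (Km v w) (Hm v w)"
  by (auto simp: vec_eq_iff lb_entry Km_left Km_right Dm_entry Hm_entry algebra_simps; simp add: scaleR_conv_of_real)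

lemma K_path: "u \<noteq> v \<Longrightarrow> v \<noteq> w \<Longrightarrow> u \<noteq> w \<Longrightarrow> Km u w = lie_bracket (Km u v) (Km v w)"
  by (auto simp: vec_eq_iff lb_entry Km_left Km_right Km_entry)

lemma K_diag: "Km v v = 0"
  by (simp add: Km_def)


lemma edge_lemma:
  fixes A :: "real^'n^'n"
  assumes sym: "\<And>k j. A$k$j = A$j$k"
    and iA: "cmat_scale \<i> (cmat_of_real A) \<in> real_lie_generated X"
    and Dv: "Dm v \<in> real_lie_generated X"
    and nb: "\<And>u. matrix_graph A v u \<Longrightarrow> u \<noteq> w \<Longrightarrow> Dm u \<in> real_lie_generated X"
    and vw: "v \<noteq> w" "A$v$w \<noteq> 0"
  shows "Km v w \<in> real_lie_generated X"
proof -
  define B where "B = lie_bracket (Dm v) (cmat_scale \<i> (cmat_of_real A))"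
  have B_in: "B \<in> real_lie_generated X"
    unfolding B_def by (rule real_lie_generated.bracket[OF Dv iA])
  have B_entry: "B$k$l = (if k = v then - of_real (A$v$l) else 0) + (if l = v then of_real (A$k$v) else 0)" for k l
    by (auto simp: B_def lb_entry Dm_left Dm_right cmat_scale_def cmat_of_real_def algebra_simps)
  define R where "R N = (\<chi> k l. if k \<in> N \<or> l \<in> N then 0 else B$k$l)" for N
  have R_in: "finite N \<Longrightarrow> (\<forall>u\<in>N. Dm u \<in> real_lie_generated X) \<Longrightarrow> R N \<in> real_lie_generated X" for N
  proof (induction N rule: finite_induct)
    case empty
    have "R {} = B" by (simp add: R_def vec_eq_iff)
    thus ?case using B_in by simp
  next
    case (insert u N)
    have e: "R (insert u N) = R N - (\<chi> k l. if (k = u) \<noteq> (l = u) then R N$k$l else 0)"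
      by (auto simp: R_def vec_eq_iff B_entry)
    have r: "R N \<in> real_lie_generated X" using insert by simp
    have d: "Dm u \<in> real_lie_generated X" using insert by simp
    show ?case unfolding e by (rule L_diff[OF r L_P[OF d r]])
  qed
  define N0 where "N0 = {u. matrix_graph A v u \<and> u \<noteq> w}"
  have "R N0 \<in> real_lie_generated X"
    by (rule R_in) (auto simp: N0_def nb)
  moreover have "R N0 = (- A$v$w) *\<^sub>R Km v w"
  proof -
    have "R N0 $ k $ l = ((- A$v$w) *\<^sub>R Km v w) $ k $ l" for k l
    proof (cases "k = v")
      case True
      then show ?thesis using vw
        by (cases "l = w"; cases "l = v") (auto simp: R_def B_entry N0_def matrix_graph_def Km_entry scaleR_entry scaleR_conv_of_real[where 'a=complex])
    next
      case False
      have s: "A$k$v = A$v$k" by (rule sym)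
      then show ?thesis using vw False
        by (cases "k = w"; cases "l = v") (auto simp: R_def B_entry N0_def matrix_graph_def Km_entry scaleR_entry scaleR_conv_of_real[where 'a=complex])
    qed
    thus ?thesis by (simp add: vec_eq_iff)
  qed
  ultimately have "(-1 / A$v$w) *\<^sub>R ((- A$v$w) *\<^sub>R Km v w) \<in> real_lie_generated X"
    by (metis real_lie_generated.smult)
  thus ?thesis using vw by simp
qed


lemma sh_iff: "M \<in> skew_hermitian_matrices \<longleftrightarrow> (\<forall>i j. cnj (M$j$i) = - M$i$j)"
  by (simp add: skew_hermitian_matrices_def vec_eq_iff)

lemma L_sub_sh:
  assumes gens: "\<And>M. M \<in> X \<Longrightarrow> M \<in> skew_hermitian_matrices"
    and "M \<in> real_lie_generated X"
  shows "M \<in> skew_hermitian_matrices"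
  using assms(2)
proof (induction rule: real_lie_generated.induct)
  case (gen M) then show ?case by (rule gens)
next
  case zero then show ?case by (simp add: sh_iff)
next
  case (add M N) then show ?case by (simp add: sh_iff)
next
  case (smult M r) then show ?case by (simp add: sh_iff scaleR_entry)
next
  case (bracket M N)
  then have m: "\<And>i j. cnj (M$j$i) = - M$i$j" and n: "\<And>i j. cnj (N$j$i) = - N$i$j"
    by (auto simp: sh_iff)
  have c: "cnj ((P ** Q)$j$i) = (Q ** P)$i$j" if p: "\<And>i j. cnj (P$j$i) = - P$i$j" and q: "\<And>i j. cnj (Q$j$i) = - Q$i$j" for P Q :: "complex^'a^'a" and i j
  proof -
    have "cnj ((P ** Q)$j$i) = (\<Sum>m\<in>UNIV. cnj (P$j$m) * cnj (Q$m$i))"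
      by (simp add: mm_entry cnj_sum)
    also have "\<dots> = (\<Sum>m\<in>UNIV. Q$i$m * P$m$j)"
      by (rule sum.cong) (simp_all add: p q)
    finally show ?thesis by (simp add: mm_entry)
  qed
  show ?case
    unfolding sh_iff lb_entry complex_cnj_diff c[OF m n] c[OF n m] by simp
qed

lemma dd1: "(\<Sum>u\<in>(UNIV::'n::finite set). \<Sum>w\<in>UNIV. if k = u \<and> l = w then f u w else 0) = (f k l::complex)" for f :: "'n::finite \<Rightarrow> 'n \<Rightarrow> complex"
proof -
  have "(\<Sum>w\<in>UNIV. if k = u \<and> l = w then f u w else 0) = (if k = u then f u l else 0)" for u
    by (cases "k = u") (simp_all add: sum.delta')
  thus ?thesis by simp
qed

lemma dd2: "(\<Sum>u\<in>(UNIV::'n::finite set). \<Sum>w\<in>UNIV. if k = w \<and> l = u then f u w else 0) = (f l k::complex)" for f :: "'n::finite \<Rightarrow> 'n \<Rightarrow> complex"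
proof -
  have "(\<Sum>w\<in>UNIV. if k = w \<and> l = u then f u w else 0) = (if l = u then f u k else 0)" for u
    by (cases "l = u") (simp_all add: sum.delta')
  thus ?thesis by simp
qed

lemma span_lemma:
  assumes M: "M \<in> skew_hermitian_matrices"
    and K: "\<And>u w. Km u w \<in> real_lie_generated X"
    and H: "\<And>u w. Hm u w \<in> real_lie_generated X"
  shows "M \<in> real_lie_generated X"
proof -
  have m: "\<And>i j. cnj (M$j$i) = - M$i$j" using M by (simp add: sh_iff)
  define T where "T u w = (Re (M$u$w) / 2) *\<^sub>R Km u w + (Im (M$u$w) / 2) *\<^sub>R Hm u w" for u w
  have Tin: "(\<Sum>u\<in>UNIV. \<Sum>w\<in>UNIV. T u w) \<in> real_lie_generated X"
    unfolding T_def by (intro L_sum real_lie_generated.add real_lie_generated.smult K H finite)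
  have Te: "T u w $ k $ l = (if k = u \<and> l = w then M$u$w / 2 else 0)
      + (if k = w \<and> l = u then (- Re (M$u$w) + \<i> * Im (M$u$w)) / 2 else 0)" for u w k l
    by (cases "k = u"; cases "l = w"; cases "k = w"; cases "l = u")
      (simp_all add: T_def scaleR_entry Km_entry Hm_entry complex_eq_iff)
  have "(\<Sum>u\<in>UNIV. \<Sum>w\<in>UNIV. T u w) $ k $ l = M $ k $ l" for k l
  proof -
    have "(\<Sum>u\<in>UNIV. \<Sum>w\<in>UNIV. T u w) $ k $ l = (\<Sum>u\<in>UNIV. \<Sum>w\<in>UNIV. T u w $ k $ l)"
      by (simp add: sum_component)
    also have "\<dots> = M$k$l / 2 + (- Re (M$l$k) + \<i> * Im (M$l$k)) / 2"
      by (simp only: Te sum.distrib dd1 dd2)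
    also have "\<dots> = M$k$l"
    proof -
      have "cnj (M$l$k) = - M$k$l" by (rule m)
      then have "Re (M$l$k) = - Re (M$k$l)" "Im (M$l$k) = Im (M$k$l)"
        by (auto simp: complex_eq_iff)
      thus ?thesis by (simp add: complex_eq_iff)
    qed
    finally show ?thesis .
  qed
  then have "(\<Sum>u\<in>UNIV. \<Sum>w\<in>UNIV. T u w) = M" by (simp add: vec_eq_iff)
  with Tin show ?thesis by simp
qed


theorem corollary4p2:
  fixes A :: "real^'n^'n" and G :: "'n \<Rightarrow> 'n \<Rightarrow> bool" and S :: "'n set"
  assumes "transpose A = A"
    and "G = matrix_graph A"
    and "graph_connected G"
    and "(\<forall>k j. k \<noteq> j \<and> A $ k $ j \<noteq> 0 \<longrightarrow> A $ k $ j > 0)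
       \<or> (\<forall>k j. k \<noteq> j \<and> A $ k $ j \<noteq> 0 \<longrightarrow> A $ k $ j < 0)"
    and "zero_forcing_set G S"
  shows "real_lie_generated
           (insert (cmat_scale \<i> (cmat_of_real A)) ((\<lambda>j. cmat_scale \<i> (diag_unit j)) ` S))
         = skew_hermitian_matrices"
proof -
  define Gens where "Gens = insert (cmat_scale \<i> (cmat_of_real A)) ((\<lambda>j. cmat_scale \<i> (diag_unit j)) ` S)"
  let ?L = "real_lie_generated Gens"
  have sym: "A$k$j = A$j$k" for k j
  proof -
    have "transpose A $ j $ k = A $ j $ k" using assms(1) by simp
    thus ?thesis by (simp add: transpose_def)
  qed
  have iA: "cmat_scale \<i> (cmat_of_real A) \<in> ?L"
    by (rule real_lie_generated.gen) (simp add: Gens_def)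
  have DS: "j \<in> S \<Longrightarrow> Dm j \<in> ?L" for j
    by (rule real_lie_generated.gen) (simp add: Gens_def Dm_def)
  have Dfc: "v \<in> forced_closure G S \<Longrightarrow> Dm v \<in> ?L" for v
  proof (induction rule: forced_closure.induct)
    case (init v) then show ?case by (rule DS)
  next
    case (force v w)
    have vw: "v \<noteq> w" "A$v$w \<noteq> 0" using force.hyps(2) assms(2) by (auto simp: matrix_graph_def)
    have Dv: "Dm v \<in> ?L" using force by simp
    have K: "Km v w \<in> ?L"
    proof (rule edge_lemma[OF sym iA Dv _ vw])
      fix u assume "matrix_graph A v u" "u \<noteq> w"
      then show "Dm u \<in> ?L" using force assms(2) by blast
    qed
    have H: "Hm v w \<in> ?L" unfolding H_eq[OF vw(1)]
      by (rule real_lie_generated.bracket[OF Dv K])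
    show ?case unfolding D_eq[OF vw(1)]
      by (intro L_diff real_lie_generated.smult real_lie_generated.bracket Dv K H)
  qed
  have D: "Dm v \<in> ?L" for v
    using Dfc assms(5) by (auto simp: zero_forcing_set_def)
  have Kedge: "G v w \<Longrightarrow> Km v w \<in> ?L" for v w
  proof -
    assume g: "G v w"
    then have vw: "v \<noteq> w" "A$v$w \<noteq> 0" using assms(2) by (auto simp: matrix_graph_def)
    show ?thesis by (rule edge_lemma[OF sym iA D _ vw]) (rule D)
  qed
  have Kall: "Km u w \<in> ?L" for u w
  proof -
    have "G\<^sup>*\<^sup>* u w" using assms(3) by (simp add: graph_connected_def)
    then show ?thesis
    proof (induction rule: rtranclp_induct)
      case base then show ?case by (simp add: K_diag real_lie_generated.zero)
    next
      case (step v w)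
      show ?case
      proof (cases "u = w")
        case True then show ?thesis by (simp add: K_diag real_lie_generated.zero)
      next
        case False
        show ?thesis
        proof (cases "u = v")
          case True then show ?thesis using Kedge step.hyps(2) by simp
        next
          case uv: False
          have vw': "v \<noteq> w" using step.hyps(2) assms(2) by (simp add: matrix_graph_def)
          show ?thesis unfolding K_path[OF uv vw' False]
            by (rule real_lie_generated.bracket[OF step.IH Kedge[OF step.hyps(2)]])
        qed
      qed
    qed
  qed
  have Hall: "Hm u w \<in> ?L" for u w
  proof (cases "u = w")
    case True then show ?thesis by (simp add: H_diag real_lie_generated.smult D)
  next
    case False then show ?thesis unfolding H_eq[OF False]
      by (intro real_lie_generated.bracket D Kall)
  qed
  have gens_sh: "M \<in> skew_hermitian_matrices" if "M \<in> Gens" for M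
    using that
  proof (auto simp: Gens_def)
    show "cmat_scale \<i> (cmat_of_real A) \<in> skew_hermitian_matrices"
      by (auto simp: sh_iff cmat_scale_def cmat_of_real_def sym)
  next
    fix j show "cmat_scale \<i> (diag_unit j) \<in> skew_hermitian_matrices"
      by (auto simp: sh_iff cmat_scale_def diag_unit_def)
  qed
  have "?L = skew_hermitian_matrices"
  proof
    show "?L \<subseteq> skew_hermitian_matrices" using L_sub_sh[OF gens_sh] by blast
    show "skew_hermitian_matrices \<subseteq> ?L" using span_lemma[OF _ Kall Hall] by blast
  qed
  thus ?thesis by (simp add: Gens_def)
qed

end
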